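(* Let $\eta_0,\eta_1,\eta_2,\dots$ be an effective enumeration of closed λ-terms with $\eta_i\twoheadrightarrow_{\beta\eta}\mathtt{I}$ for all $i$. Let $\mathbf{I}^\Omega$ and $\boldsymbol{\eta}^\Omega$ be closed λ-terms (defined via the fixed point combinator) such that $\mathbf{I}^\Omega yx=_\beta[y\Omega^{\sim n}x]_{n\in\mathbb{N}}=[yx,[y\Omega x,[y\Omega\Omega x,\dots]]]$ and $\boldsymbol{\eta}^\Omega yx=_\beta[y\Omega^{\sim n}(\eta_nx)]_{n\in\mathbb{N}}=[y(\eta_0x),[y\Omega(\eta_1x),[y\Omega\Omega(\eta_2x),\dots]]]$. Then $\mathcal{B}\omega\vdash\mathbf{I}^\Omega=\boldsymbol{\eta}^\Omega$.
   Context: $\mathtt{I}=\lambda x.x$, $\Omega=(\lambda x.xx)(\lambda x.xx)$, $M\Omega^{\sim n}$ denotes $M\Omega\cdots\Omega$ ($n$ copies). Pairs/tuples: $[M_1,\dots,M_n]=\lambda z.zM_1\cdots M_n$ with $z$ fresh. An enumeration $(M_n)_n$ of closed terms is effective if there is a closed $F$ with $F\,\underline{n}=_\beta M_n$ for all $n$, where $\underline n=\lambda fz.f^n(z)$ is the Church numeral; then the stream $[M_n]_{n\in\mathbb{N}}$ is a λ-term with $[M_n]_{n\in\mathbb{N}}=_\beta[M_0,[M_{n+1}]_{n\in\mathbb{N}}]$. $\mathcal{B}=\{(M,N):BT(M)=BT(N)\}$; the ω-rule: if $MP=NP$ for all closed $P$ then $M=N$; $\mathcal{B}\omega$ is the least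 λ-theory containing $\mathcal{B}$ closed under the ω-rule. *)

theory Defs
  imports Main
begin

datatype lterm = Var nat | App lterm lterm | Abs lterm

primrec lift :: "lterm \<Rightarrow> nat \<Rightarrow> lterm" where
  "lift (Var i) k = (if i < k then Var i else Var (i + 1))"
| "lift (App s t) k = App (lift s k) (lift t k)"
| "lift (Abs s) k = Abs (lift s (k + 1))"

primrec subst :: "lterm \<Rightarrow> lterm \<Rightarrow> nat \<Rightarrow> lterm" where
  "subst (Var i) s k = (if k < i then Var (i - 1) else if i = k then s else Var i)"
| "subst (App t u) s k = App (subst t s k) (subst u s k)"
| "subst (Abs t) s k = Abs (subst t (lift s 0) (k + 1))"

primrec closedat :: "lterm \<Rightarrow> nat \<Rightarrow> bool" where
  "closedat (Var i) k = (i < k)"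
| "closedat (App s t) k = (closedat s k \<and> closedat t k)"
| "closedat (Abs s) k = closedat s (k + 1)"

definition closed :: "lterm \<Rightarrow> bool" where
  "closed t = closedat t 0"

inductive beta :: "lterm \<Rightarrow> lterm \<Rightarrow> bool" where
  beta_redex: "beta (App (Abs s) t) (subst s t 0)"
| beta_appL: "beta s t \<Longrightarrow> beta (App s u) (App t u)"
| beta_appR: "beta s t \<Longrightarrow> beta (App u s) (App u t)"
| beta_abs: "beta s t \<Longrightarrow> beta (Abs s) (Abs t)"

inductive eta :: "lterm \<Rightarrow> lterm \<Rightarrow> bool" where
  eta_redex: "eta (Abs (App (lift s 0) (Var 0))) s"
| eta_appL: "eta s t \<Longrightarrow> eta (App s u) (App t u)"
| eta_appR: "eta s t \<Longrightarrow> eta (App u s) (App u t)"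
| eta_abs: "eta s t \<Longrightarrow> eta (Abs s) (Abs t)"

definition beq :: "lterm \<Rightarrow> lterm \<Rightarrow> bool" where
  "beq = equivclp beta"

definition beta_eta_red :: "lterm \<Rightarrow> lterm \<Rightarrow> bool" where
  "beta_eta_red = (sup beta eta)\<^sup>*\<^sup>*"

definition I_term :: lterm where "I_term = Abs (Var 0)"

definition Omega :: lterm where
  "Omega = App (Abs (App (Var 0) (Var 0))) (Abs (App (Var 0) (Var 0)))"

text \<open>Church numeral lambda f z. f^n z\<close>
definition church :: "nat \<Rightarrow> lterm" where
  "church n = Abs (Abs ((App (Var 1) ^^ n) (Var 0)))"

text \<open>Church successor lambda n f z. f (n f z)\<close>
definition SUCC :: lterm where
  "SUCC = Abs (Abs (Abs (App (Var 1) (App (App (Var 2) (Var 1)) (Var 0)))))"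

text \<open>Turing's fixed point combinator Theta = A A with A = lambda x y. y (x x y)\<close>
definition Theta :: lterm where
  "Theta = (let A = Abs (Abs (App (Var 0) (App (App (Var 1) (Var 1)) (Var 0)))) in App A A)"

text \<open>Stream constructor: STREAM F =_beta [F 0, STREAM (lambda k. F (succ k))],
  so that for F representing (M_n)_n, STREAM F is the stream [M_n]_n.\<close>
definition STREAM :: lterm where
  "STREAM = App Theta
     (Abs (Abs (Abs
        (App (App (Var 0) (App (Var 1) (church 0)))
             (App (Var 2) (Abs (App (Var 2) (App SUCC (Var 0)))))))))"

definition stream :: "lterm \<Rightarrow> lterm" where
  "stream F = App STREAM F"

definition app_Omegas :: "lterm \<Rightarrow> nat \<Rightarrow> lterm" where
  "app_Omegas M n = ((\<lambda>t. App t Omega) ^^ n) M"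

definition mk_hnf :: "nat \<Rightarrow> nat \<Rightarrow> lterm list \<Rightarrow> lterm" where
  "mk_hnf n v Ms = (Abs ^^ n) (foldl App (Var v) Ms)"

definition has_hnf :: "lterm \<Rightarrow> bool" where
  "has_hnf M = (\<exists>n v Ms. beq M (mk_hnf n v Ms))"

coinductive bt_eq :: "lterm \<Rightarrow> lterm \<Rightarrow> bool" where
  bt_unsolv: "\<not> has_hnf M \<Longrightarrow> \<not> has_hnf N \<Longrightarrow> bt_eq M N"
| bt_hnf: "beq M (mk_hnf n v Ms) \<Longrightarrow> beq N (mk_hnf n v Ns) \<Longrightarrow>
           list_all2 bt_eq Ms Ns \<Longrightarrow> bt_eq M N"

inductive Bomega :: "lterm \<Rightarrow> lterm \<Rightarrow> bool" where
  Bw_B: "bt_eq M N \<Longrightarrow> Bomega M N"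
| Bw_refl: "Bomega M M"
| Bw_sym: "Bomega M N \<Longrightarrow> Bomega N M"
| Bw_trans: "Bomega M N \<Longrightarrow> Bomega N P \<Longrightarrow> Bomega M P"
| Bw_appL: "Bomega M N \<Longrightarrow> Bomega (App M Z) (App N Z)"
| Bw_appR: "Bomega M N \<Longrightarrow> Bomega (App Z M) (App Z N)"
| Bw_abs: "Bomega M N \<Longrightarrow> Bomega (Abs M) (Abs N)"
| Bw_omega: "(\<And>P. closed P \<Longrightarrow> Bomega (App M P) (App N P)) \<Longrightarrow> Bomega M N"

end

theory Submission
  imports Defs
begin

lemma lift_lift:
  "i < k + 1 \<Longrightarrow> lift (lift t i) (Suc k) = lift (lift t k) i"
  by (induct t arbitrary: i k) auto

lemma lift_subst [simp]:
  "j < i + 1 \<Longrightarrow> lift (subst t s j) i = subst (lift t (i + 1)) (lift s i) j"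
  apply (induct t arbitrary: i j s) apply (auto simp: diff_Suc lift_lift split: nat.split) done

lemma lift_subst_lt:
  "i < j + 1 \<Longrightarrow> lift (subst t s j) i = subst (lift t i) (lift s i) (j + 1)"
  by (induct t arbitrary: i j s) (auto simp: lift_lift)

lemma subst_lift [simp]: "subst (lift t k) s k = t"
  by (induct t arbitrary: k s) simp_all

lemma subst_subst:
  "i < j + 1 \<Longrightarrow> subst (subst t (lift v i) (Suc j)) (subst u v j) i = subst (subst t u i) v j"
  by (induct t arbitrary: i j u v)
    (simp_all add: diff_Suc subst_lift lift_lift [symmetric] lift_subst_lt split: nat.split)

lemma closedat_mono: "closedat t k \<Longrightarrow> k \<le> j \<Longrightarrow> closedat t j"
  by (induct t arbitrary: k j) auto

lemma lift_closed: "closedat t k \<Longrightarrow> k \<le> j \<Longrightarrow> lift t j = t"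
  by (induct t arbitrary: k j) auto

lemma subst_closed: "closedat t k \<Longrightarrow> k \<le> j \<Longrightarrow> subst t s j = t"
  by (induct t arbitrary: k j s) auto

lemma closedat_lift: "closedat t k \<Longrightarrow> closedat (lift t j) (Suc k)"
  by (induct t arbitrary: k j) auto

lemma closedat_subst: "closedat s (Suc k) \<Longrightarrow> closedat t k \<Longrightarrow> j \<le> k \<Longrightarrow> closedat (subst s t j) k"
  by (induct s arbitrary: k j t) (auto simp: closedat_lift)

lemma beta_closedat: "beta s t \<Longrightarrow> closedat s k \<Longrightarrow> closedat t k"
  by (induct arbitrary: k rule: beta.induct) (auto simp: closedat_subst)

lemma betas_closedat: "beta\<^sup>*\<^sup>* s t \<Longrightarrow> closedat s k \<Longrightarrow> closedat t k"
  by (induct rule: rtranclp_induct) (auto simp: beta_closedat)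

lemma beta_subst: "beta s t \<Longrightarrow> beta (subst s u i) (subst t u i)"
proof (induct arbitrary: u i rule: beta.induct)
  case (beta_redex s t)
  show ?case using beta.beta_redex[of "subst s (lift u 0) (Suc i)" "subst t u i"]
    by (simp add: subst_subst[symmetric])
qed (auto intro: beta.intros)

lemma beta_lift: "beta s t \<Longrightarrow> beta (lift s i) (lift t i)"
proof (induct arbitrary: i rule: beta.induct)
  case (beta_redex s t)
  show ?case using beta.beta_redex[of "lift s (Suc i)" "lift t i"] by simp
qed (auto intro: beta.intros)

section \<open>CR\<close>

inductive par :: "lterm \<Rightarrow> lterm \<Rightarrow> bool" where
  pvar: "par (Var n) (Var n)"
| pabs: "par s t \<Longrightarrow> par (Abs s) (Abs t)"
| papp: "par s s' \<Longrightarrow> par t t' \<Longrightarrow> par (App s t) (App s' t')"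
| pbeta: "par s s' \<Longrightarrow> par t t' \<Longrightarrow> par (App (Abs s) t) (subst s' t' 0)"

lemma par_refl [simp]: "par t t"
  by (induct t) (auto intro: par.intros)

lemma beta_par: "beta s t \<Longrightarrow> par s t"
  by (induct rule: beta.induct) (auto intro: par.intros)

lemma betas_appL: "beta\<^sup>*\<^sup>* s t \<Longrightarrow> beta\<^sup>*\<^sup>* (App s u) (App t u)"
  by (induct rule: rtranclp_induct) (auto intro: beta.intros rtranclp.rtrancl_into_rtrancl)
lemma betas_appR: "beta\<^sup>*\<^sup>* s t \<Longrightarrow> beta\<^sup>*\<^sup>* (App u s) (App u t)"
  by (induct rule: rtranclp_induct) (auto intro: beta.intros rtranclp.rtrancl_into_rtrancl)
lemma betas_abs: "beta\<^sup>*\<^sup>* s t \<Longrightarrow> beta\<^sup>*\<^sup>* (Abs s) (Abs t)"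
  by (induct rule: rtranclp_induct) (auto intro: beta.intros rtranclp.rtrancl_into_rtrancl)

lemma par_betas: "par s t \<Longrightarrow> beta\<^sup>*\<^sup>* s t"
proof (induct rule: par.induct)
  case (papp s s' t t')
  then show ?case by (meson betas_appL betas_appR rtranclp_trans)
next
  case (pbeta s s' t t')
  have "beta\<^sup>*\<^sup>* (App (Abs s) t) (App (Abs s') t')"
    by (meson betas_appL betas_appR betas_abs rtranclp_trans pbeta)
  then show ?case by (meson beta.beta_redex rtranclp.rtrancl_into_rtrancl)
qed (auto intro: betas_abs)

lemma par_lift: "par s t \<Longrightarrow> par (lift s k) (lift t k)"
proof (induct arbitrary: k rule: par.induct)
  case (pbeta s s' t t')
  show ?case using par.pbeta[OF pbeta(2)[of "Suc k"] pbeta(4)[of k]] by simp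
qed (auto intro: par.intros)

lemma par_subst: "par s s' \<Longrightarrow> par t t' \<Longrightarrow> par (subst s t k) (subst s' t' k)"
proof (induct arbitrary: t t' k rule: par.induct)
  case (pabs s s')
  have "par (subst s (lift t 0) (Suc k)) (subst s' (lift t' 0) (Suc k))"
    using pabs(2) par_lift[OF pabs(3)] by blast
  then show ?case by (simp add: par.pabs)
next
  case (papp s s' u u')
  then show ?case by (auto intro!: par.intros)
next
  case (pbeta s s' u u')
  have "par (App (Abs (subst s (lift t 0) (Suc k))) (subst u t k))
            (subst (subst s' (lift t' 0) (Suc k)) (subst u' t' k) 0)"
    by (rule par.pbeta) (auto intro: pbeta par_lift)
  then show ?case by (simp add: subst_subst[symmetric])
qed (auto intro: par.intros)

fun cd :: "lterm \<Rightarrow> lterm" where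
  "cd (Var n) = Var n"
| "cd (Abs s) = Abs (cd s)"
| "cd (App (Abs s) t) = subst (cd s) (cd t) 0"
| "cd (App (Var n) t) = App (Var n) (cd t)"
| "cd (App (App s u) t) = App (cd (App s u)) (cd t)"

inductive_cases parE:
  "par (Var n) t" "par (Abs s) t" "par (App s u) t"

lemma par_cd: "par s t \<Longrightarrow> par t (cd s)"
proof (induct s arbitrary: t rule: cd.induct)
  case (1 n) then show ?case by (auto elim: parE)
next
  case (2 s) then show ?case by (auto elim!: parE intro: par.intros)
next
  case (3 s u)
  from 3(3) have "(\<exists>s' u'. t = App (Abs s') u' \<and> par s s' \<and> par u u') \<or>
     (\<exists>s' u'. t = subst s' u' 0 \<and> par s s' \<and> par u u')"
    by (auto elim!: parE)
  then show ?case using 3(1,2) by (auto intro: par_subst par.pbeta)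
next
  case (4 n u) then show ?case by (auto elim!: parE intro: par.intros)
next
  case (5 s u v)
  from 5(3) show ?case
    by (cases rule: parE(3)) (auto intro: par.intros 5)
qed

lemma par_strip: "par\<^sup>*\<^sup>* s u \<Longrightarrow> par s t \<Longrightarrow> \<exists>w. par\<^sup>*\<^sup>* t w \<and> par u w"
proof (induct arbitrary: t rule: rtranclp_induct)
  case base then show ?case by blast
next
  case (step y z)
  then obtain w where "par\<^sup>*\<^sup>* t w" "par y w" by blast
  then show ?case using step par_cd
    by (meson rtranclp.rtrancl_into_rtrancl)
qed

lemma par_CR: "par\<^sup>*\<^sup>* s t \<Longrightarrow> par\<^sup>*\<^sup>* s u \<Longrightarrow> \<exists>w. par\<^sup>*\<^sup>* t w \<and> par\<^sup>*\<^sup>* u w"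
proof (induct arbitrary: u rule: rtranclp_induct)
  case base then show ?case by blast
next
  case (step y z)
  then obtain w where "par\<^sup>*\<^sup>* y w" "par\<^sup>*\<^sup>* u w" by blast
  from par_strip[OF this(1) step(2)] obtain w' where "par\<^sup>*\<^sup>* z w'" "par w w'" by blast
  then show ?case using \<open>par\<^sup>*\<^sup>* u w\<close> by (meson rtranclp.rtrancl_into_rtrancl)
qed

lemma pars_betas: "par\<^sup>*\<^sup>* s t \<Longrightarrow> beta\<^sup>*\<^sup>* s t"
  by (induct rule: rtranclp_induct) (auto dest: par_betas)
lemma betas_pars: "beta\<^sup>*\<^sup>* s t \<Longrightarrow> par\<^sup>*\<^sup>* s t"
  by (induct rule: rtranclp_induct) (auto dest: beta_par intro: rtranclp.rtrancl_into_rtrancl)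

lemma beta_CR: "beta\<^sup>*\<^sup>* s t \<Longrightarrow> beta\<^sup>*\<^sup>* s u \<Longrightarrow> \<exists>w. beta\<^sup>*\<^sup>* t w \<and> beta\<^sup>*\<^sup>* u w"
  by (meson betas_pars pars_betas par_CR)

lemma beq_CR: "beq s t \<Longrightarrow> \<exists>w. beta\<^sup>*\<^sup>* s w \<and> beta\<^sup>*\<^sup>* t w"
  unfolding beq_def
proof (induct rule: equivclp_induct)
  case base then show ?case by blast
next
  case (step y z)
  then obtain w where w: "beta\<^sup>*\<^sup>* s w" "beta\<^sup>*\<^sup>* y w" by blast
  from step(2) show ?case
  proof
    assume "beta y z"
    then obtain w' where "beta\<^sup>*\<^sup>* w w'" "beta\<^sup>*\<^sup>* z w'" using beta_CR[OF w(2)] by blast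
    then show ?thesis using w by (meson rtranclp_trans)
  next
    assume "beta z y" then show ?thesis using w by (meson converse_rtranclp_into_rtranclp)
  qed
qed


inductive_cases betaE: "beta (Var i) t" "beta (Abs s) t" "beta (App s u) t"

lemma beq_refl [simp]: "beq x x" by (simp add: beq_def)
lemma beq_sym: "beq x y \<Longrightarrow> beq y x" unfolding beq_def by (rule equivclp_sym)
lemma beq_trans: "beq x y \<Longrightarrow> beq y z \<Longrightarrow> beq x z"
  unfolding beq_def by (meson equivclp_trans)
lemma betas_beq: "beta\<^sup>*\<^sup>* x y \<Longrightarrow> beq x y"
  unfolding beq_def by (rule predicate2D[OF rtranlcp_le_equivclp])
lemma beta_beq: "beta x y \<Longrightarrow> beq x y"
  by (simp add: betas_beq r_into_rtranclp)

lemma beq_map: assumes "\<And>a b. beta a b \<Longrightarrow> beta (f a) (f b)" and "beq x y"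
  shows "beq (f x) (f y)"
  using assms(2) unfolding beq_def
proof (induct rule: equivclp_induct)
  case base then show ?case by simp
next
  case (step y z)
  from step(2) have "beta (f y) (f z) \<or> beta (f z) (f y)"
    using assms(1) by blast
  then show ?case using step(3) by (rule equivclp_into_equivclp[rotated])
qed

lemma beq_appL: "beq s t \<Longrightarrow> beq (App s u) (App t u)"
  using beq_map[of "\<lambda>x. App x u"] beta_appL by blast
lemma beq_appR: "beq s t \<Longrightarrow> beq (App u s) (App u t)"
  using beq_map[of "\<lambda>x. App u x"] beta_appR by blast
lemma beq_subst: "beq s t \<Longrightarrow> beq (subst s u i) (subst t u i)"
  using beq_map[of "\<lambda>x. subst x u i"] beta_subst by blast
lemma beq_lift: "beq s t \<Longrightarrow> beq (lift s i) (lift t i)"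
  using beq_map[of "\<lambda>x. lift x i"] beta_lift by blast

section \<open>head shapes\<close>

inductive hdv :: "nat \<Rightarrow> lterm \<Rightarrow> bool" where
  "hdv v (Var v)"
| "hdv v M \<Longrightarrow> hdv v (App M N)"

lemma hdv_foldl: "hdv v M \<Longrightarrow> hdv v (foldl App M Ms)"
  by (induct Ms arbitrary: M) (auto intro: hdv.intros)

lemma hdv_beta: "beta M N \<Longrightarrow> hdv v M \<Longrightarrow> hdv v N"
  by (induct rule: beta.induct) (auto elim: hdv.cases intro: hdv.intros)

lemma hdv_betas: "beta\<^sup>*\<^sup>* M N \<Longrightarrow> hdv v M \<Longrightarrow> hdv v N"
  by (induct rule: rtranclp_induct) (auto intro: hdv_beta)

lemma abs_pow_beta: "beta ((Abs ^^ n) H) L \<Longrightarrow> \<exists>H'. L = (Abs ^^ n) H' \<and> beta H H'"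
  by (induct n arbitrary: L) (auto elim!: betaE(2))

lemma abs_pow_betas: "beta\<^sup>*\<^sup>* ((Abs ^^ n) H) L \<Longrightarrow> \<exists>H'. L = (Abs ^^ n) H' \<and> beta\<^sup>*\<^sup>* H H'"
proof (induct rule: rtranclp_induct)
  case base then show ?case by blast
next
  case (step y z)
  then obtain H' where "y = (Abs ^^ n) H'" "beta\<^sup>*\<^sup>* H H'" by blast
  then show ?case using abs_pow_beta[of n H' z] step(2)
    by (meson rtranclp.rtrancl_into_rtrancl)
qed

lemma mk_hnf_betas: "beta\<^sup>*\<^sup>* (mk_hnf n v Ms) L \<Longrightarrow> \<exists>H. L = (Abs ^^ n) H \<and> hdv v H"
  unfolding mk_hnf_def
  using abs_pow_betas hdv_betas hdv_foldl hdv.intros(1) by blast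

inductive omh :: "lterm \<Rightarrow> bool" where
  "omh Omega"
| "omh M \<Longrightarrow> omh (App M N)"

lemma Omega_beta: "beta Omega N \<Longrightarrow> N = Omega"
  unfolding Omega_def by (auto elim!: betaE)

lemma omh_AppD: "omh (App M N) \<Longrightarrow> App M N = Omega \<or> omh M"
  by (cases rule: omh.cases) auto

lemma omh_AbsD: "omh (Abs M) \<Longrightarrow> False"
  by (cases rule: omh.cases) (auto simp: Omega_def)

lemma beta_Om_body: "beta (Abs (App (Var 0) (Var 0))) t \<Longrightarrow> False"
  by (auto elim!: betaE)

lemma omh_beta: "beta M N \<Longrightarrow> omh M \<Longrightarrow> omh N"
proof (induct rule: beta.induct)
  case (beta_redex s t)
  from omh_AppD[OF beta_redex] show ?case
  proof
    assume "App (Abs s) t = Omega"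
    then have "s = App (Var 0) (Var 0)" "t = Abs (App (Var 0) (Var 0))" by (auto simp: Omega_def)
    then have "subst s t 0 = Omega" by (simp add: Omega_def)
    then show ?thesis by (simp add: omh.intros(1))
  qed (auto dest: omh_AbsD)
next
  case (beta_appL s t u)
  from omh_AppD[OF beta_appL(3)] show ?case
  proof
    assume "App s u = Omega"
    then have "s = Abs (App (Var 0) (Var 0))" by (simp add: Omega_def)
    then show ?thesis using beta_appL(1) beta_Om_body by blast
  qed (auto intro: omh.intros beta_appL(2))
next
  case (beta_appR s t u)
  from omh_AppD[OF beta_appR(3)] show ?case
  proof
    assume "App u s = Omega"
    then have "s = Abs (App (Var 0) (Var 0))" by (simp add: Omega_def)
    then show ?thesis using beta_appR(1) beta_Om_body by blast
  qed (auto intro: omh.intros)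
next
  case (beta_abs s t)
  then show ?case by (auto dest: omh_AbsD)
qed

lemma omh_betas: "beta\<^sup>*\<^sup>* M N \<Longrightarrow> omh M \<Longrightarrow> omh N"
  by (induct rule: rtranclp_induct) (auto intro: omh_beta)

lemma omh_not_Abs: "omh M \<Longrightarrow> M \<noteq> Abs s"
  using omh_AbsD by blast

lemma hdv_Abs: "\<not> hdv v (Abs s)"
  by (auto elim: hdv.cases)

lemma omh_hdv: "hdv v M \<Longrightarrow> omh M \<Longrightarrow> False"
proof (induct rule: hdv.induct)
  case (1 v) then show ?case by (cases rule: omh.cases) (auto simp: Omega_def)
next
  case (2 v M N)
  from 2(3) have "omh M \<or> App M N = Omega" by (cases rule: omh.cases) auto
  then show ?case
  proof
    assume "App M N = Omega"
    then have "M = Abs (App (Var 0) (Var 0))" by (simp add: Omega_def)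
    then show False using 2(1) hdv_Abs by blast
  qed (rule 2(2))
qed

lemma omh_abs_pow: "False" if "omh ((Abs ^^ n) H)" "hdv v H"
proof (cases n)
  case 0
  then show ?thesis using that omh_hdv by simp
next
  case (Suc m)
  then have "(Abs ^^ n) H = Abs ((Abs ^^ m) H)" by simp
  then show ?thesis using that omh_not_Abs by blast
qed

lemma omh_unsolv: "beta\<^sup>*\<^sup>* M W \<Longrightarrow> omh W \<Longrightarrow> \<not> has_hnf M"
proof
  assume r: "beta\<^sup>*\<^sup>* M W" and o: "omh W" and "has_hnf M"
  then obtain n v Ms where "beq M (mk_hnf n v Ms)" unfolding has_hnf_def by blast
  then have "beq W (mk_hnf n v Ms)" using r by (meson beq_sym beq_trans betas_beq)
  then obtain w where "beta\<^sup>*\<^sup>* W w" "beta\<^sup>*\<^sup>* (mk_hnf n v Ms) w" using beq_CR by blast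
  moreover obtain H where "w = (Abs ^^ n) H" "hdv v H" using mk_hnf_betas calculation(2) by blast
  moreover have "omh w" using omh_betas calculation(1) o by blast
  ultimately show False using omh_abs_pow by blast
qed

lemma Omega_unsolv: "\<not> has_hnf Omega"
  using omh_unsolv omh.intros(1) by blast

lemma closed_Omega [simp]: "closedat Omega k"
  by (simp add: Omega_def)
lemma lift_Omega [simp]: "lift Omega k = Omega"
  by (simp add: Omega_def)
lemma subst_Omega [simp]: "subst Omega s k = Omega"
  by (simp add: Omega_def)

lemma closedat_abs_pow [simp]: "closedat ((Abs ^^ n) H) k = closedat H (k + n)"
  by (induct n arbitrary: k) auto

lemma hdv_closedat: "hdv v H \<Longrightarrow> closedat H k \<Longrightarrow> v < k"
  by (induct rule: hdv.induct) auto

lemma solvable_closed: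
  assumes "closed P" "has_hnf P"
  shows "\<exists>k v H. beta\<^sup>*\<^sup>* P ((Abs ^^ k) H) \<and> hdv v H \<and> v < k"
proof -
  obtain n v Ms where "beq P (mk_hnf n v Ms)" using assms(2) unfolding has_hnf_def by blast
  then obtain w where w: "beta\<^sup>*\<^sup>* P w" "beta\<^sup>*\<^sup>* (mk_hnf n v Ms) w" using beq_CR by blast
  then obtain H where H: "w = (Abs ^^ n) H" "hdv v H" using mk_hnf_betas by blast
  have "closedat w 0" using betas_closedat[OF w(1)] assms(1) unfolding closed_def by blast
  then have "v < n" using H hdv_closedat by auto
  then show ?thesis using w H by blast
qed

inductive sp :: "nat \<Rightarrow> lterm \<Rightarrow> bool" where
  "sp k Omega"
| "v < k \<Longrightarrow> sp k (Var v)"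
| "sp k M \<Longrightarrow> sp k (App M N)"

lemma hdv_sp: "hdv v H \<Longrightarrow> v < k \<Longrightarrow> sp k H"
  by (induct rule: hdv.induct) (auto intro: sp.intros)

lemma sp_subst: "sp (Suc k) H \<Longrightarrow> sp k (subst H Omega k)"
  by (induct "Suc k" H rule: sp.induct) (auto intro: sp.intros)

lemma sp0: "sp 0 H \<Longrightarrow> omh H"
  by (induct "0::nat" H rule: sp.induct) (auto intro: omh.intros)

lemma subst_abs_pow_closed: "closedat s 0 \<Longrightarrow> subst ((Abs ^^ m) t) s k = (Abs ^^ m) (subst t s (k + m))"
  by (induct m arbitrary: k) (auto simp: lift_closed)

lemma app_Omegas_Suc: "app_Omegas M (Suc n) = app_Omegas (App M Omega) n"
  unfolding app_Omegas_def by (simp add: funpow_Suc_right del: funpow.simps)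

lemma app_Omegas_0 [simp]: "app_Omegas M 0 = M"
  unfolding app_Omegas_def by simp

lemma app_Omegas_add: "app_Omegas M (a + b) = app_Omegas (app_Omegas M a) b"
  unfolding app_Omegas_def by (simp only: add.commute[of a b] funpow_add comp_apply)

lemma app_Omegas_betas: "beta\<^sup>*\<^sup>* s t \<Longrightarrow> beta\<^sup>*\<^sup>* (app_Omegas s n) (app_Omegas t n)"
  by (induct n arbitrary: s t) (auto simp: app_Omegas_Suc intro: betas_appL)

lemma app_Omegas_omh: "omh M \<Longrightarrow> omh (app_Omegas M n)"
  by (induct n arbitrary: M) (auto simp: app_Omegas_Suc intro: omh.intros)

lemma sp_reduce: "sp k H \<Longrightarrow> \<exists>W. beta\<^sup>*\<^sup>* (app_Omegas ((Abs ^^ k) H) k) W \<and> omh W"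
proof (induct k arbitrary: H)
  case 0 then show ?case using sp0 by auto
next
  case (Suc k)
  have "beta (App ((Abs ^^ Suc k) H) Omega) ((Abs ^^ k) (subst H Omega k))"
    using beta_redex[of "(Abs ^^ k) H" Omega]
    by (simp add: subst_abs_pow_closed)
  then have "beta\<^sup>*\<^sup>* (app_Omegas ((Abs ^^ Suc k) H) (Suc k)) (app_Omegas ((Abs ^^ k) (subst H Omega k)) k)"
    unfolding app_Omegas_Suc by (intro app_Omegas_betas r_into_rtranclp)
  moreover obtain W where "beta\<^sup>*\<^sup>* (app_Omegas ((Abs ^^ k) (subst H Omega k)) k) W" "omh W"
    using Suc sp_subst by blast
  ultimately show ?case by (meson rtranclp_trans)
qed

lemma eventually_unsolv:
  assumes "closed P" and True: "has_hnf P"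
  shows "\<exists>k. \<forall>n\<ge>k. \<forall>Z. \<not> has_hnf (App (app_Omegas P n) Z)"
proof -
  obtain k v H where H: "beta\<^sup>*\<^sup>* P ((Abs ^^ k) H)" "hdv v H" "v < k"
    using solvable_closed assms by blast
  obtain W where W: "beta\<^sup>*\<^sup>* (app_Omegas ((Abs ^^ k) H) k) W" "omh W"
    using sp_reduce hdv_sp H by blast
  have "\<not> has_hnf (App (app_Omegas P n) Z)" if "n \<ge> k" for n Z
  proof -
    obtain d where d: "n = k + d" using \<open>n \<ge> k\<close> le_Suc_ex by blast
    have "beta\<^sup>*\<^sup>* (app_Omegas P k) W"
      using app_Omegas_betas[OF H(1)] W(1) by (meson rtranclp_trans)
    then have "beta\<^sup>*\<^sup>* (App (app_Omegas P n) Z) (App (app_Omegas W d) Z)"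
      unfolding d app_Omegas_add by (intro betas_appL app_Omegas_betas)
    moreover have "omh (App (app_Omegas W d) Z)" using W(2) by (auto intro: omh.intros app_Omegas_omh)
    ultimately show ?thesis using omh_unsolv by blast
  qed
  then show ?thesis by blast
qed


lemma beq_bt: "beq M N \<Longrightarrow> bt_eq M N"
proof (coinduction arbitrary: M N rule: bt_eq.coinduct)
  case (bt_eq M N)
  show ?case
  proof (cases "has_hnf M")
    case True
    then obtain n v Ms where h: "beq M (mk_hnf n v Ms)" unfolding has_hnf_def by blast
    then have "beq N (mk_hnf n v Ms)" using bt_eq beq_sym beq_trans by blast
    moreover have "list_all2 (\<lambda>x y. (\<exists>M N. x = M \<and> y = N \<and> beq M N) \<or> bt_eq x y) Ms Ms"
      by (rule list_all2_refl) simp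
    ultimately show ?thesis using h by blast
  next
    case False
    then have "\<not> has_hnf N" using bt_eq unfolding has_hnf_def using beq_trans by blast
    then show ?thesis using False by blast
  qed
qed

lemma beq_Bomega: "beq M N \<Longrightarrow> Bomega M N"
  by (simp add: Bw_B beq_bt)

lemma has_hnf_beq: "beq M N \<Longrightarrow> has_hnf M \<Longrightarrow> has_hnf N"
  unfolding has_hnf_def using beq_sym beq_trans by blast

lemma subst_abs_pow_var: "subst ((Abs ^^ m) t) (Var j) k = (Abs ^^ m) (subst t (Var (j + m)) (k + m))"
  by (induct m arbitrary: j k) auto

lemma subst_foldl: "subst (foldl App h Ms) s k = foldl App (subst h s k) (map (\<lambda>t. subst t s k) Ms)"
  by (induct Ms arbitrary: h) auto

lemma subst_mk_hnf_var: "\<exists>v' Ms'. subst (mk_hnf n v Ms) (Var j) k = mk_hnf n v' Ms'"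
proof -
  obtain v' where "subst (Var v) (Var (j + n)) (k + n) = Var v'"
    by (cases "k + n < v"; cases "v = k + n") auto
  then show ?thesis unfolding mk_hnf_def subst_abs_pow_var subst_foldl by auto
qed

lemma unsolv_lift: "\<not> has_hnf M \<Longrightarrow> \<not> has_hnf (lift M 0)"
proof
  assume "\<not> has_hnf M" "has_hnf (lift M 0)"
  then obtain n v Ms where "beq (lift M 0) (mk_hnf n v Ms)" unfolding has_hnf_def by blast
  then have "beq M (subst (mk_hnf n v Ms) (Var 0) 0)" using beq_subst[of _ _ "Var 0" 0] by fastforce
  then show False using subst_mk_hnf_var \<open>\<not> has_hnf M\<close> unfolding has_hnf_def by metis
qed

lemma eta_Bomega: "eta s t \<Longrightarrow> Bomega s t"
proof (induct rule: eta.induct)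
  case (eta_redex s)
  show ?case
  proof (rule Bw_omega)
    fix P
    have "beta (App (Abs (App (lift s 0) (Var 0))) P) (App s P)"
      using beta_redex[of "App (lift s 0) (Var 0)" P] by simp
    then show "Bomega (App (Abs (App (lift s 0) (Var 0))) P) (App s P)"
      by (simp add: beq_Bomega beta_beq)
  qed
qed (auto intro: Bomega.intros)

lemma beta_Bomega: "beta s t \<Longrightarrow> Bomega s t"
  by (simp add: beq_Bomega beta_beq)

lemma bered_Bomega: "beta_eta_red s t \<Longrightarrow> Bomega s t"
  unfolding beta_eta_red_def
  by (induct rule: rtranclp_induct) (auto intro: Bomega.intros beta_Bomega eta_Bomega)

section \<open>church numerals\<close>

lemma closedat_cbody: "closedat ((App (Var 1) ^^ n) (Var 0)) 2"
  by (induct n) auto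

lemma closed_church [simp]: "closedat (church n) k"
  unfolding church_def using closedat_mono[OF closedat_cbody[of n], of "k + 2"] by simp

lemma lift_church [simp]: "lift (church n) k = church n"
  using lift_closed[OF closed_church[of n 0]] by simp
lemma subst_church [simp]: "subst (church n) s k = church n"
  using subst_closed[OF closed_church[of n 0]] by simp

lemma closed_SUCC [simp]: "closedat SUCC k" by (simp add: SUCC_def)
lemma lift_SUCC [simp]: "lift SUCC k = SUCC"
  using lift_closed[OF closed_SUCC[of 0]] by simp
lemma subst_SUCC [simp]: "subst SUCC s k = SUCC"
  using subst_closed[OF closed_SUCC[of 0]] by simp

lemma cbody1: "subst ((App (Var (Suc 0)) ^^ n) (Var 0)) (Var j) (Suc 0) = (App (Var j) ^^ n) (Var 0)"
  by (induct n) auto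
lemma cbody2: "subst ((App (Var (Suc j)) ^^ n) (Var 0)) (Var 0) 0 = (App (Var j) ^^ n) (Var 0)"
  by (induct n) auto

lemma SUCC_church: "beq (App SUCC (church n)) (church (Suc n))"
proof -
  have s1: "beta (App SUCC (church n))
     (Abs (Abs (App (Var 1) (App (App (church n) (Var 1)) (Var 0)))))"
    using beta_redex[of "Abs (Abs (App (Var 1) (App (App (Var 2) (Var 1)) (Var 0))))" "church n"]
    by (simp add: SUCC_def)
  have s2: "beta (App (church n) (Var 1)) (Abs ((App (Var 2) ^^ n) (Var 0)))"
    using beta_redex[of "Abs ((App (Var 1) ^^ n) (Var 0))" "Var 1"]
    by (simp add: church_def cbody1 One_nat_def numeral_2_eq_2)
  have s3: "beta (App (Abs ((App (Var 2) ^^ n) (Var 0))) (Var 0)) ((App (Var 1) ^^ n) (Var 0))"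
    using beta_redex[of "(App (Var 2) ^^ n) (Var 0)" "Var 0"]
    by (simp add: cbody2 One_nat_def numeral_2_eq_2)
  have "beta\<^sup>*\<^sup>* (App (App (church n) (Var 1)) (Var 0)) ((App (Var 1) ^^ n) (Var 0))"
    using s2 s3 by (meson beta_appL r_into_rtranclp rtranclp.rtrancl_into_rtrancl)
  then have "beta\<^sup>*\<^sup>* (Abs (Abs (App (Var 1) (App (App (church n) (Var 1)) (Var 0)))))
     (church (Suc n))"
    unfolding church_def by (simp add: betas_abs betas_appR)
  then show ?thesis using s1 by (meson betas_beq converse_rtranclp_into_rtranclp)
qed

section \<open>streams\<close>

definition Afix :: lterm where
  "Afix = Abs (Abs (App (Var 0) (App (App (Var 1) (Var 1)) (Var 0))))"
definition Bf :: lterm where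
  "Bf = (Abs (Abs (Abs
        (App (App (Var 0) (App (Var 1) (church 0)))
             (App (Var 2) (Abs (App (Var 2) (App SUCC (Var 0)))))))))"
definition PAIR :: lterm where
  "PAIR = Abs (Abs (Abs (App (App (Var 0) (Var 2)) (Var 1))))"

lemma STREAM_eq: "STREAM = App (App Afix Afix) Bf"
  by (simp add: STREAM_def Theta_def Afix_def Bf_def Let_def)

lemma closed_STREAM [simp]: "closedat STREAM k"
  by (simp add: STREAM_eq Afix_def Bf_def SUCC_def)
lemma lift_STREAM [simp]: "lift STREAM k = STREAM"
  using lift_closed[OF closed_STREAM[of 0]] by simp
lemma subst_STREAM [simp]: "subst STREAM s k = STREAM"
  using subst_closed[OF closed_STREAM[of 0]] by simp

definition G2 :: "lterm \<Rightarrow> lterm" where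
  "G2 G = Abs (App (lift G 0) (App SUCC (Var 0)))"

lemma STREAM_unfold: "beta\<^sup>*\<^sup>* STREAM (App Bf STREAM)"
proof -
  have "beta (App (App Afix Afix) Bf) (App (Abs (App (Var 0) (App (App Afix Afix) (Var 0)))) Bf)"
    using beta_redex[of "Abs (App (Var 0) (App (App (Var 1) (Var 1)) (Var 0)))" Afix]
    by (simp add: Afix_def beta_appL)
  moreover have "beta (App (Abs (App (Var 0) (App (App Afix Afix) (Var 0)))) Bf) (App Bf STREAM)"
    using beta_redex[of "App (Var 0) (App (App Afix Afix) (Var 0))" Bf]
    by (simp add: Afix_def STREAM_eq)
  ultimately show ?thesis unfolding STREAM_eq by (meson r_into_rtranclp rtranclp.rtrancl_into_rtrancl)
qed

lemma stream_red: "beq (stream G)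
   (Abs (App (App (Var 0) (App (lift G 0) (church 0)))
        (App STREAM (Abs (App (lift (lift G 0) 0) (App SUCC (Var 0)))))))"
proof -
  have "beq (stream G) (App (App Bf STREAM) G)"
    unfolding stream_def using STREAM_unfold by (simp add: betas_appL betas_beq)
  moreover have "beta (App Bf STREAM)
      (Abs (Abs (App (App (Var 0) (App (Var 1) (church 0)))
             (App STREAM (Abs (App (Var 2) (App SUCC (Var 0))))))))"
    using beta_redex[of "Abs (Abs (App (App (Var 0) (App (Var 1) (church 0)))
             (App (Var 2) (Abs (App (Var 2) (App SUCC (Var 0)))))))" STREAM]
    by (simp add: Bf_def)
  moreover have "beta (App (Abs (Abs (App (App (Var 0) (App (Var 1) (church 0)))
             (App STREAM (Abs (App (Var 2) (App SUCC (Var 0)))))))) G)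
     (Abs (App (App (Var 0) (App (lift G 0) (church 0)))
        (App STREAM (Abs (App (lift (lift G 0) 0) (App SUCC (Var 0)))))))"
    using beta_redex[of "Abs (App (App (Var 0) (App (Var 1) (church 0)))
             (App STREAM (Abs (App (Var 2) (App SUCC (Var 0))))))" G]
    by simp
  ultimately show ?thesis
    by (meson beq_trans beta_beq beta_appL)
qed


lemma stream_hnf: "beq (stream G) (mk_hnf 1 0 [lift (App G (church 0)) 0, lift (stream (G2 G)) 0])"
  using stream_red[of G] by (simp add: mk_hnf_def stream_def G2_def lift_lift)

lemma pair_red: "beq (App (App PAIR X) Y) (Abs (App (App (Var 0) (lift X 0)) (lift Y 0)))"
proof -
  have "beta (App PAIR X) (Abs (Abs (App (App (Var 0) (lift (lift X 0) 0)) (Var 1))))"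
    using beta_redex[of "Abs (Abs (App (App (Var 0) (Var 2)) (Var 1)))" X]
    by (simp add: PAIR_def numeral_2_eq_2)
  moreover have "beta (App (Abs (Abs (App (App (Var 0) (lift (lift X 0) 0)) (Var 1)))) Y)
     (Abs (App (App (Var 0) (lift X 0)) (lift Y 0)))"
    using beta_redex[of "Abs (App (App (Var 0) (lift (lift X 0) 0)) (Var 1))" Y]
    by (simp add: lift_lift[of 0 0, symmetric, simplified])
  ultimately show ?thesis by (meson beq_trans beta_beq beta_appL)
qed

lemma stream_pair: "beq (stream G) (App (App PAIR (App G (church 0))) (stream (G2 G)))"
  using stream_hnf[of G] pair_red[of "App G (church 0)" "stream (G2 G)"]
  by (simp add: mk_hnf_def) (meson beq_sym beq_trans)

lemma G2_church: "beq (App (G2 G) (church n)) (App G (church (Suc n)))"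
proof -
  have "beta (App (G2 G) (church n)) (App G (App SUCC (church n)))"
    using beta_redex[of "App (lift G 0) (App SUCC (Var 0))" "church n"] by (simp add: G2_def)
  then show ?thesis using SUCC_church beq_appR beq_trans beta_beq by blast
qed

definition allU :: "lterm \<Rightarrow> bool" where
  "allU G = (\<forall>n. \<not> has_hnf (App G (church n)))"

lemma allU_G2: "allU G \<Longrightarrow> allU (lift (G2 G) 0)"
  unfolding allU_def
proof
  fix n assume a: "\<forall>n. \<not> has_hnf (App G (church n))"
  have "\<not> has_hnf (App (G2 G) (church n))"
    using a G2_church has_hnf_beq by blast
  then have "\<not> has_hnf (lift (App (G2 G) (church n)) 0)" by (rule unsolv_lift)
  then show "\<not> has_hnf (App (lift (G2 G) 0) (church n))" by simp
qed

lemma stream_bt: "allU G \<Longrightarrow> allU H \<Longrightarrow> bt_eq (stream G) (stream H)"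
proof (coinduction arbitrary: G H rule: bt_eq.coinduct)
  case (bt_eq G H)
  let ?Ms = "[lift (App G (church 0)) 0, lift (stream (G2 G)) 0]"
  let ?Ns = "[lift (App H (church 0)) 0, lift (stream (G2 H)) 0]"
  have u1: "bt_eq (lift (App G (church 0)) 0) (lift (App H (church 0)) 0)"
    using bt_eq unfolding allU_def by (intro bt_unsolv unsolv_lift) auto
  have "lift (stream (G2 G)) 0 = stream (lift (G2 G) 0)"
       "lift (stream (G2 H)) 0 = stream (lift (G2 H) 0)"
    by (simp_all add: stream_def)
  then have u2: "\<exists>G' H'. lift (stream (G2 G)) 0 = stream G' \<and> lift (stream (G2 H)) 0 = stream H'
       \<and> allU G' \<and> allU H'"
    using allU_G2 bt_eq by metis
  have "list_all2 (\<lambda>x y. (\<exists>G H. x = stream G \<and> y = stream H \<and> allU G \<and> allU H) \<or> bt_eq x y) ?Ms ?Ns"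
    using u1 u2 by simp
  then show ?case using stream_hnf[of G] stream_hnf[of H] by blast
qed

lemma streamB:
  "(\<forall>n\<ge>i. \<not> has_hnf (App G (church n)) \<and> \<not> has_hnf (App H (church n))) \<Longrightarrow>
   (\<forall>n<i. Bomega (App G (church n)) (App H (church n))) \<Longrightarrow> Bomega (stream G) (stream H)"
proof (induct i arbitrary: G H)
  case 0
  then have "bt_eq (stream G) (stream H)" by (intro stream_bt) (auto simp: allU_def)
  then show ?case by (rule Bw_B)
next
  case (Suc i)
  have a: "\<forall>n\<ge>i. \<not> has_hnf (App (G2 G) (church n)) \<and> \<not> has_hnf (App (G2 H) (church n))"
  proof (intro allI impI)
    fix n assume "i \<le> n"
    then have "\<not> has_hnf (App G (church (Suc n))) \<and> \<not> has_hnf (App H (church (Suc n)))"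
      using Suc(2) by simp
    then show "\<not> has_hnf (App (G2 G) (church n)) \<and> \<not> has_hnf (App (G2 H) (church n))"
      using G2_church has_hnf_beq by blast
  qed
  have b: "\<forall>n<i. Bomega (App (G2 G) (church n)) (App (G2 H) (church n))"
  proof (intro allI impI)
    fix n assume "n < i"
    then have "Bomega (App G (church (Suc n))) (App H (church (Suc n)))" using Suc(3) by simp
    then show "Bomega (App (G2 G) (church n)) (App (G2 H) (church n))"
      using G2_church[of G n] G2_church[of H n] beq_Bomega beq_sym Bw_trans Bw_sym by metis
  qed
  have ih: "Bomega (stream (G2 G)) (stream (G2 H))" using Suc(1)[OF a b] .
  have c0: "Bomega (App G (church 0)) (App H (church 0))" using Suc(3) by simp
  have "Bomega (App (App PAIR (App G (church 0))) (stream (G2 G)))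
                (App (App PAIR (App H (church 0))) (stream (G2 H)))"
    using Bw_trans[OF Bw_appL[OF Bw_appR[OF c0]] Bw_appR[OF ih]] .
  then show ?case using stream_pair[of G] stream_pair[of H] beq_Bomega beq_sym Bw_trans by metis
qed


lemma app_Omegas_Suc2: "app_Omegas M (Suc n) = App (app_Omegas M n) Omega"
  by (simp add: app_Omegas_def)

lemma subst_app_Omegas: "subst (app_Omegas M n) s k = app_Omegas (subst M s k) n"
  by (induct n) (auto simp: app_Omegas_Suc2)

lemma subst_stream: "subst (stream F) s k = stream (subst F s k)"
  by (simp add: stream_def)

lemma closed_subst: "closed M \<Longrightarrow> subst M s k = M"
  unfolding closed_def by (erule subst_closed) simp

theorem mainTheorem12:
  fixes etas :: "nat \<Rightarrow> lterm" and IOm etaOm :: lterm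
  assumes etas_closed: "\<And>i. closed (etas i)"
    and etas_eff: "\<exists>E. closed E \<and> (\<forall>n. beq (App E (church n)) (etas n))"
    and etas_red: "\<And>i. beta_eta_red (etas i) I_term"
    and IOm_closed: "closed IOm" and etaOm_closed: "closed etaOm"
    and IOm_eq: "\<exists>F. (\<forall>n. beq (App F (church n)) (App (app_Omegas (Var 0) n) (Var 1)))
                   \<and> beq (App (App IOm (Var 0)) (Var 1)) (stream F)"
    and etaOm_eq: "\<exists>F. (\<forall>n. beq (App F (church n))
                            (App (app_Omegas (Var 0) n) (App (etas n) (Var 1))))
                   \<and> beq (App (App etaOm (Var 0)) (Var 1)) (stream F)"
  shows "Bomega IOm etaOm"
proof -
  obtain FI where FI: "\<forall>n. beq (App FI (church n)) (App (app_Omegas (Var 0) n) (Var 1))"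
      "beq (App (App IOm (Var 0)) (Var 1)) (stream FI)" using IOm_eq by blast
  obtain FE where FE: "\<forall>n. beq (App FE (church n)) (App (app_Omegas (Var 0) n) (App (etas n) (Var 1)))"
      "beq (App (App etaOm (Var 0)) (Var 1)) (stream FE)" using etaOm_eq by blast
  have etaI: "Bomega (etas n) I_term" for n using etas_red bered_Bomega by blast
  have key: "Bomega (App IOm P) (App etaOm P)"
    if P: "closed P" and ev: "\<exists>k. \<forall>n\<ge>k. \<forall>Z. \<not> has_hnf (App (app_Omegas P n) Z)" for P
  proof -
    obtain k where k: "\<forall>n\<ge>k. \<forall>Z. \<not> has_hnf (App (app_Omegas P n) Z)" using ev by blast
    show ?thesis
    proof (rule Bw_omega)
      fix Q assume Q: "closed Q"
      define G where "G = subst (subst FI P 0) Q 0"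
      define H where "H = subst (subst FE P 0) Q 0"
      have e1: "beq (App (App IOm P) Q) (stream G)"
        using beq_subst[OF beq_subst[OF FI(2), of P 0], of Q 0]
        by (simp add: G_def closed_subst IOm_closed P subst_stream)
      have e2: "beq (App (App etaOm P) Q) (stream H)"
        using beq_subst[OF beq_subst[OF FE(2), of P 0], of Q 0]
        by (simp add: H_def closed_subst etaOm_closed P subst_stream)
      have g: "beq (App G (church n)) (App (app_Omegas P n) Q)" for n
        using beq_subst[OF beq_subst[OF FI(1)[rule_format, of n], of P 0], of Q 0]
        by (simp add: G_def closed_subst P subst_app_Omegas)
      have h: "beq (App H (church n)) (App (app_Omegas P n) (App (etas n) Q))" for n
        using beq_subst[OF beq_subst[OF FE(1)[rule_format, of n], of P 0], of Q 0]
        by (simp add: H_def closed_subst P subst_app_Omegas etas_closed)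
      have c1: "\<forall>n\<ge>k. \<not> has_hnf (App G (church n)) \<and> \<not> has_hnf (App H (church n))"
        using k g h has_hnf_beq by blast
      have c2: "\<forall>n<k. Bomega (App G (church n)) (App H (church n))"
      proof (intro allI impI)
        fix n
        have "beta (App I_term Q) Q"
          using beta_redex[of "Var 0" Q] by (simp add: I_term_def)
        then have "Bomega (App (etas n) Q) Q"
          using Bw_trans[OF Bw_appL[OF etaI] beta_Bomega] by blast
        then have "Bomega (App (app_Omegas P n) Q) (App (app_Omegas P n) (App (etas n) Q))"
          by (intro Bw_appR) (rule Bw_sym)
        then show "Bomega (App G (church n)) (App H (church n))"
          using g[of n] h[of n] beq_Bomega beq_sym Bw_trans by metis
      qed
      have "Bomega (stream G) (stream H)" using streamB[OF c1 c2] .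
      then show "Bomega (App (App IOm P) Q) (App (App etaOm P) Q)"
        using e1 e2 beq_Bomega beq_sym Bw_trans by metis
    qed
  qed
  show ?thesis
  proof (rule Bw_omega)
    fix P assume P: "closed P"
    show "Bomega (App IOm P) (App etaOm P)"
    proof (cases "has_hnf P")
      case True
      show ?thesis using key[OF P eventually_unsolv[OF P True]] .
    next
      case False
      have bP: "Bomega P Omega" using Bw_B[OF bt_unsolv[OF False Omega_unsolv]] .
      have "\<not> has_hnf (App (app_Omegas Omega n) Z)" for n Z
        using omh_unsolv[OF rtranclp.rtrancl_refl] app_Omegas_omh omh.intros by blast
      then have Om: "Bomega (App IOm Omega) (App etaOm Omega)"
        using key[of Omega] by (simp add: closed_def)
      show ?thesis using Bw_trans[OF Bw_appR[OF bP] Bw_trans[OF Om Bw_sym[OF Bw_appR[OF bP]]]] .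
    qed
  qed
qed


end
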